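(* Let $q,n,a,h,t$ be positive integers with $a\le q-1$, $h\le n$, and $a\le t\le ah$. Let $\mathcal C\subseteq[q]^n$ be an $(a,h,t)^\circ$-AED code. Then $|\mathcal C|\le\frac{q^n}{t+1}$.
   Context: $[q]=\{0,1,\dots,q-1\}$ and $+_q$ denotes coordinatewise addition modulo $q$. Cyclic asymmetric channel: an input $\mathbf x\in[q]^n$ can produce any output $\mathbf y=\mathbf x+_q\mathbf f$, where $\mathbf f\in[q]^n$ satisfies (1) $0\le f_i\le a$ for all $i$; (2) $\sum_{i=1}^n\mathbb 1_{\{f_i\ne0\}}\le h$; (3) $\sum_{i=1}^n f_i\le t$. These are called $(a,h,t)^\circ$-asymmetric errors; $\mathrm{Out}^\circ(\mathbf x)$ denotes the set of all such outputs. A code $\mathcal C\subseteq[q]^n$ is $(a,h,t)^\circ$-AED if for all $\mathbf x\in\mathcal C$ and $\mathbf y\in\mathrm{Out}^\circ(\mathbf x)$ with $\mathbf y\ne\mathbf x$, we have $\mathbf y\notin\mathcal C$. *)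

theory Defs
  imports Complex_Main
begin

(* Words of length n over [q] = {0..q-1}: functions nat => nat with entries < q at
   positions 0..n-1 and value 0 outside (canonical representative). *)
definition words :: "nat \<Rightarrow> nat \<Rightarrow> (nat \<Rightarrow> nat) set" where
  "words q n = {x. (\<forall>i<n. x i < q) \<and> (\<forall>i\<ge>n. x i = 0)}"

definition err_vecs :: "nat \<Rightarrow> nat \<Rightarrow> nat \<Rightarrow> nat \<Rightarrow> (nat \<Rightarrow> nat) set" where
  "err_vecs n a h t = {f. (\<forall>i\<ge>n. f i = 0) \<and> (\<forall>i<n. f i \<le> a)
       \<and> card {i. i < n \<and> f i \<noteq> 0} \<le> h \<and> (\<Sum>i<n. f i) \<le> t}"

definition out_cyc :: "nat \<Rightarrow> nat \<Rightarrow> nat \<Rightarrow> nat \<Rightarrow> nat \<Rightarrow> (nat \<Rightarrow> nat) \<Rightarrow> (nat \<Rightarrow> nat) set" where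
  "out_cyc q n a h t x = {(\<lambda>i. if i < n then (x i + f i) mod q else 0) | f. f \<in> err_vecs n a h t}"

definition cyc_AED :: "nat \<Rightarrow> nat \<Rightarrow> nat \<Rightarrow> nat \<Rightarrow> nat \<Rightarrow> (nat \<Rightarrow> nat) set \<Rightarrow> bool" where
  "cyc_AED q n a h t C \<longleftrightarrow>
     (\<forall>x\<in>C. \<forall>y\<in>out_cyc q n a h t x. y \<noteq> x \<longrightarrow> y \<notin> C)"

end

theory Submission
  imports Defs "HOL-Library.FuncSet" "HOL-Number_Theory.Cong"
begin

lemma sum_min_le: "(\<Sum>k<n. min (a::nat) (j - a*k)) \<le> j"
proof (induction n arbitrary: j)
  case 0 then show ?case by simp
next
  case (Suc n)
  have "(\<Sum>k<Suc n. min a (j - a*k)) = min a j + (\<Sum>k<n. min a (j - a*Suc k))"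
    by (subst sum.lessThan_Suc_shift) simp
  also have "(\<Sum>k<n. min a (j - a*Suc k)) = (\<Sum>k<n. min a ((j - a) - a*k))"
    by (intro sum.cong) (auto simp: algebra_simps diff_diff_add)
  also have "\<dots> \<le> j - a" by (rule Suc.IH)
  finally show ?case by linarith
qed

lemma mod_cancel_nat: "((x::nat) + c) mod q = (y + c) mod q \<Longrightarrow> x mod q = y mod q"
  using cong_add_rcancel_nat[of x c y q] unfolding cong_def by blast

lemma words_card: "finite (words q n) \<and> card (words q n) \<le> q ^ n"
proof -
  let ?r = "\<lambda>x::nat\<Rightarrow>nat. restrict x {..<n}"
  have inj: "inj_on ?r (words q n)"
  proof (rule inj_onI)
    fix x y assume "x \<in> words q n" "y \<in> words q n" "?r x = ?r y"
    show "x = y"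
    proof (rule ext)
      fix k show "x k = y k"
      proof (cases "k < n")
        case True then show ?thesis using fun_cong[OF \<open>?r x = ?r y\<close>, of k] by simp
      next
        case False then show ?thesis using \<open>x \<in> words q n\<close> \<open>y \<in> words q n\<close>
          unfolding words_def by simp
      qed
    qed
  qed
  have sub: "?r ` words q n \<subseteq> (\<Pi>\<^sub>E i\<in>{..<n}. {..<q})"
  proof (rule image_subsetI)
    fix x assume "x \<in> words q n"
    then show "?r x \<in> (\<Pi>\<^sub>E i\<in>{..<n}. {..<q})"
      by (simp add: restrict_PiE_iff words_def)
  qed
  have fin: "finite (\<Pi>\<^sub>E i\<in>{..<n}. {..<q})" by (intro finite_PiE) auto
  have "finite (words q n)" using finite_subset[OF sub fin] inj finite_imageD by blast
  moreover have "card (words q n) \<le> card (\<Pi>\<^sub>E i\<in>{..<n}. {..<q})"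
    by (rule card_inj_on_le[OF inj sub fin])
  moreover have "card (\<Pi>\<^sub>E i\<in>{..<n}. {..<q}) = q ^ n" by (simp add: card_PiE)
  ultimately show ?thesis by simp
qed

theorem theorem5:
  fixes q n a h t :: nat and C :: "(nat \<Rightarrow> nat) set"
  assumes "0 < q" "0 < n" "0 < a" "0 < h" "0 < t"
    and "a \<le> q - 1" "h \<le> n" "a \<le> t" "t \<le> a * h"
    and "C \<subseteq> words q n"
    and "cyc_AED q n a h t C"
  shows "real (card C) \<le> real q ^ n / real (t + 1)"
proof -
  define g where "g j k = (if k < n then min a (j - a*k) else 0)" for j k :: nat
  define T where "T p = (\<lambda>k. if k < n then (fst p k + g (snd p) k) mod q else 0)" for p :: "(nat\<Rightarrow>nat) \<times> nat"
  have aq: "a < q" using assms by linarith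
  have gmono: "g i k \<le> g j k" if "i \<le> j" for i j k
    using that unfolding g_def by auto
  have derr: "(\<lambda>k. g j k - g i k) \<in> err_vecs n a h t" if "i < j" "j \<le> t" for i j
  proof -
    have s: "{k. k < n \<and> g j k - g i k \<noteq> 0} \<subseteq> {..<h}"
    proof
      fix k assume "k \<in> {k. k < n \<and> g j k - g i k \<noteq> 0}"
      then have "a*k < j" unfolding g_def by auto
      then have "a*k < a*h" using that assms by linarith
      then show "k \<in> {..<h}" by simp
    qed
    have "card {k. k < n \<and> g j k - g i k \<noteq> 0} \<le> h"
      using card_mono[OF _ s] by simp
    moreover have "(\<Sum>k<n. g j k - g i k) \<le> t"
    proof -
      have "(\<Sum>k<n. g j k - g i k) \<le> (\<Sum>k<n. g j k)" by (intro sum_mono) auto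
      also have "\<dots> = (\<Sum>k<n. min a (j - a*k))" by (intro sum.cong) (auto simp: g_def)
      also have "\<dots> \<le> j" by (rule sum_min_le)
      finally show ?thesis using that by linarith
    qed
    moreover have "\<forall>k\<ge>n. g j k - g i k = 0" by (simp add: g_def)
    moreover have "\<forall>k<n. g j k - g i k \<le> a" by (auto simp: g_def intro: order_trans[OF diff_le_self])
    ultimately show ?thesis unfolding err_vecs_def mem_Collect_eq by blast
  qed
  have dnz: "\<exists>k<n. g i k < g j k" if "i < j" "j \<le> t" for i j
  proof -
    define k where "k = i div a"
    have "i < a*h" using that assms by linarith
    then have "k < h" unfolding k_def using assms
      by (simp add: div_less_iff_less_mult mult.commute)
    then have kn: "k < n" using assms by linarith
    have "a*k \<le> i" using div_times_less_eq_dividend[of i a] by (simp add: k_def mult.commute)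
    moreover have "i - a*k < a" unfolding k_def using assms
      by (simp add: minus_mult_div_eq_mod)
    ultimately have "g i k = i - a*k" "g i k < g j k" using kn that unfolding g_def by auto
    then show ?thesis using kn by blast
  qed
  have Cw: "\<And>x k. x \<in> C \<Longrightarrow> k < n \<Longrightarrow> x k < q" "\<And>x k. x \<in> C \<Longrightarrow> \<not> k < n \<Longrightarrow> x k = 0"
    using assms(10) unfolding words_def by auto
  have noclash: False if "x \<in> C" "y \<in> C" "i < j" "j \<le> t" "T (x,i) = T (y,j)" for x y i j
  proof -
    define d where "d = (\<lambda>k. g j k - g i k)"
    have eqk: "x k = (y k + d k) mod q" if "k < n" for k
    proof -
      have "(x k + g i k) mod q = ((y k + d k) + g i k) mod q"
        using fun_cong[OF \<open>T (x,i) = T (y,j)\<close>, of k] \<open>k<n\<close> gmono[of i j k] \<open>i<j\<close>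
        by (simp add: T_def d_def)
      then have "x k mod q = (y k + d k) mod q" by (rule mod_cancel_nat)
      then show ?thesis using Cw(1)[OF \<open>x\<in>C\<close> that] by simp
    qed
    have xo: "x \<in> out_cyc q n a h t y"
      unfolding out_cyc_def using derr[OF \<open>i<j\<close> \<open>j\<le>t\<close>] eqk Cw(2)[OF \<open>x\<in>C\<close>]
      by (auto simp: d_def intro!: exI[of _ d] ext)
    show False
    proof (cases "x = y")
      case True
      obtain k where k: "k < n" "g i k < g j k" using dnz[OF \<open>i<j\<close> \<open>j\<le>t\<close>] by blast
      have "d k \<le> a" using derr[OF \<open>i<j\<close> \<open>j\<le>t\<close>] k unfolding err_vecs_def d_def by auto
      then have dq: "d k < q" using aq by linarith
      have "y k = (y k + d k) mod q" using eqk[OF k(1)] True by simp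
      moreover have "y k < q" using Cw(1)[OF \<open>y\<in>C\<close> k(1)] .
      moreover have "d k > 0" using k unfolding d_def by simp
      ultimately show False using dq
      proof (cases "y k + d k < q")
        case True then show ?thesis using \<open>y k = (y k + d k) mod q\<close> \<open>d k > 0\<close> by simp
      next
        case False
        then have "(y k + d k) mod q = y k + d k - q"
          using \<open>y k < q\<close> dq by (simp add: le_mod_geq)
        then show ?thesis using \<open>y k = (y k + d k) mod q\<close> dq False by linarith
      qed
    next
      case False
      then show False using assms(11) xo \<open>x\<in>C\<close> \<open>y\<in>C\<close> unfolding cyc_AED_def by blast
    qed
  qed
  have injT: "inj_on T (C \<times> {..t})"
  proof (rule inj_onI)
    fix p p' assume p: "p \<in> C \<times> {..t}" and p': "p' \<in> C \<times> {..t}" and e: "T p = T p'"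
    obtain x i where [simp]: "p = (x,i)" by (cases p)
    obtain y j where [simp]: "p' = (y,j)" by (cases p')
    have xc: "x \<in> C" "i \<le> t" "y \<in> C" "j \<le> t" using p p' by auto
    consider "i < j" | "j < i" | "i = j" by linarith
    then show "p = p'"
    proof cases
      case 1 then show ?thesis using noclash[of x y i j] xc e by auto
    next
      case 2 then show ?thesis using noclash[of y x j i] xc e by auto
    next
      case 3
      have "x k = y k" for k
      proof (cases "k < n")
        case True
        have "(x k + g i k) mod q = (y k + g i k) mod q"
          using fun_cong[OF e, of k] True 3 by (simp add: T_def)
        then have "x k mod q = y k mod q" by (rule mod_cancel_nat)
        then show ?thesis using Cw(1)[OF xc(1) True] Cw(1)[OF xc(3) True] by simp
      next
        case False then show ?thesis using Cw(2) xc by metis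
      qed
      then show ?thesis using 3 by auto
    qed
  qed
  have imT: "T ` (C \<times> {..t}) \<subseteq> words q n"
    using assms(1) by (auto simp: T_def words_def)
  have "card (C \<times> {..t}) \<le> card (words q n)"
    using card_inj_on_le[OF injT imT] words_card by blast
  also have "\<dots> \<le> q ^ n" using words_card by blast
  finally have "card C * (t+1) \<le> q ^ n" by (simp add: card_cartesian_product)
  then have "real (card C) * real (t+1) \<le> real q ^ n"
    using of_nat_mono[of "card C * (t+1)" "q^n", where 'a=real] by (simp only: of_nat_mult of_nat_power)
  then show ?thesis by (simp add: pos_le_divide_eq)
qed

end
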